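(* The space $\mathcal K=\bigcup_{d\ge 2}\mathcal O_d$ of all polynomial knots, equipped with the inductive limit topology, is homotopy equivalent to $S^2$.
   Context: A polynomial map is a map $\phi:\mathbb R\to\mathbb R^3$ whose three component functions are real polynomials. A polynomial knot is a polynomial map which is a smooth embedding, i.e. $\phi$ is injective and $\phi'(t)\neq 0$ for all $t$. For an integer $d\ge 2$, $\mathcal A_d$ denotes the set of polynomial maps $t\mapsto (f(t),g(t),h(t))$ with $\deg f\le d-2$, $\deg g\le d-1$, $\deg h\le d$ (the zero polynomial allowed). Writing $f=\sum_{i=0}^{d-2}a_it^i$, $g=\sum_{i=0}^{d-1}b_it^i$, $h=\sum_{i=0}^{d}c_it^i$, the bijection $\eta:\mathcal A_d\to\mathbb R^{3d}$, $(f,g,h)\mapsto(a_0,\dots,a_{d-2},b_0,\dots,b_{d-1},c_0,\dots,c_d)$ is declared a homeomorphism (Euclidean topology on $\mathbb R^{3d}$). $\mathcal O_d$ is the set of polynomial knots in $\mathcal A_d$, with the subspace topology. Every polynomial knot lies in some $\mathcal O_d$, and $\mathcal K=\bigcup_{d\ge2}\mathcal O_d$ is the set of all polynomial knots. The inductive limit topology on $\mathcal K$: a set $V\subseteq\mathcal K$ is open iff $V\cap\mathcal O_d$ is open in $\mathcal O_d$ for every $d\ge 2$. *)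

theory Defs
  imports "HOL-Analysis.Analysis" "HOL-Computational_Algebra.Polynomial"
begin

type_synonym polymap = "real poly \<times> real poly \<times> real poly"

definition pmap :: "polymap \<Rightarrow> real \<Rightarrow> real \<times> real \<times> real" where
  "pmap P t = (case P of (f, g, h) \<Rightarrow> (poly f t, poly g t, poly h t))"

definition poly_knot :: "polymap \<Rightarrow> bool" where
  "poly_knot P \<longleftrightarrow> (case P of (f, g, h) \<Rightarrow>
     inj (pmap P) \<and>
     (\<forall>t. (poly (pderiv f) t, poly (pderiv g) t, poly (pderiv h) t) \<noteq> (0, 0, 0)))"

definition A_set :: "nat \<Rightarrow> polymap set" where
  "A_set d = {(f, g, h). degree f \<le> d - 2 \<and> degree g \<le> d - 1 \<and> degree h \<le> d}"

text \<open>The coefficient map eta_d, landing in R^{3d}, realised as the functions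
  nat => real vanishing from index 3d on (with the product topology, this
  subspace is exactly Euclidean R^{3d}).\<close>
definition eta :: "nat \<Rightarrow> polymap \<Rightarrow> (nat \<Rightarrow> real)" where
  "eta d P = (case P of (f, g, h) \<Rightarrow>
     (\<lambda>i. if i < d - 1 then coeff f i
          else if i < 2 * d - 1 then coeff g (i - (d - 1))
          else if i < 3 * d then coeff h (i - (2 * d - 1))
          else 0))"

text \<open>Topology on A_d making eta_d a homeomorphism onto R^{3d}.\<close>
definition A_top :: "nat \<Rightarrow> polymap topology" where
  "A_top d = pullback_topology (A_set d) (eta d) euclidean"

definition O_set :: "nat \<Rightarrow> polymap set" where
  "O_set d = {P \<in> A_set d. poly_knot P}"

definition O_top :: "nat \<Rightarrow> polymap topology" where
  "O_top d = subtopology (A_top d) (O_set d)"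

definition K_set :: "polymap set" where
  "K_set = (\<Union>d\<in>{2..}. O_set d)"

definition K_top :: "polymap topology" where
  "K_top = topology (\<lambda>V. V \<subseteq> K_set \<and> (\<forall>d\<ge>2. openin (O_top d) (V \<inter> O_set d)))"

end

theory Submission
  imports Defs
begin


lemma istop_K: "istopology (\<lambda>V. V \<subseteq> K_set \<and> (\<forall>d\<ge>2. openin (O_top d) (V \<inter> O_set d)))"
  unfolding istopology_def
proof (rule conjI; intro allI impI)
  fix S T assume S: "S \<subseteq> K_set \<and> (\<forall>d\<ge>2. openin (O_top d) (S \<inter> O_set d))"
    and T: "T \<subseteq> K_set \<and> (\<forall>d\<ge>2. openin (O_top d) (T \<inter> O_set d))"
  show "S \<inter> T \<subseteq> K_set \<and> (\<forall>d\<ge>2. openin (O_top d) (S \<inter> T \<inter> O_set d))"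
  proof (intro conjI allI impI)
    show "S \<inter> T \<subseteq> K_set" using S by auto
    fix d :: nat assume "d \<ge> 2"
    have "S \<inter> T \<inter> O_set d = (S \<inter> O_set d) \<inter> (T \<inter> O_set d)" by auto
    then show "openin (O_top d) (S \<inter> T \<inter> O_set d)" using S T \<open>d \<ge> 2\<close> by auto
  qed
next
  fix K assume K: "\<forall>V\<in>K. V \<subseteq> K_set \<and> (\<forall>d\<ge>2. openin (O_top d) (V \<inter> O_set d))"
  show "\<Union>K \<subseteq> K_set \<and> (\<forall>d\<ge>2. openin (O_top d) (\<Union>K \<inter> O_set d))"
  proof (intro conjI allI impI)
    show "\<Union>K \<subseteq> K_set" using K by auto
    fix d :: nat assume "d \<ge> 2"
    have "\<Union>K \<inter> O_set d = \<Union>((\<lambda>V. V \<inter> O_set d) ` K)" by auto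
    moreover have "openin (O_top d) (\<Union>((\<lambda>V. V \<inter> O_set d) ` K))" using K \<open>d \<ge> 2\<close>
      by (intro openin_Union) auto
    ultimately show "openin (O_top d) (\<Union>K \<inter> O_set d)" by simp
  qed
qed

lemma openin_K: "openin K_top V \<longleftrightarrow> V \<subseteq> K_set \<and> (\<forall>d\<ge>2. openin (O_top d) (V \<inter> O_set d))"
  unfolding K_top_def using topology_inverse'[OF istop_K] by simp

lemma O_sub_A: "O_set d \<subseteq> A_set d" unfolding O_set_def by auto

lemma topspace_A: "topspace (A_top d) = A_set d"
  unfolding A_top_def topspace_pullback_topology by auto

lemma topspace_O: "topspace (O_top d) = O_set d"
  unfolding O_top_def using topspace_A O_sub_A by auto

lemma O_sub_K: "d \<ge> 2 \<Longrightarrow> O_set d \<subseteq> K_set"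
  unfolding K_set_def by auto

lemma topspace_K: "topspace K_top = K_set"
proof -
  have "openin K_top K_set"
    unfolding openin_K
  proof (intro conjI allI impI)
    fix d :: nat assume "d \<ge> 2"
    then have "K_set \<inter> O_set d = topspace (O_top d)" using O_sub_K topspace_O by auto
    then show "openin (O_top d) (K_set \<inter> O_set d)" by simp
  qed simp
  then show ?thesis using openin_K openin_subset
    by (metis openin_topspace subset_antisym)
qed

lemma eta_alt: "eta d P j = (if j < d - 1 then coeff (fst P) j
          else if j < 2 * d - 1 then coeff (fst (snd P)) (j - (d - 1))
          else if j < 3 * d then coeff (snd (snd P)) (j - (2 * d - 1))
          else 0)"
  unfolding eta_def by (cases P) auto

lemma proj_cont: "continuous_map euclidean euclideanreal (\<lambda>y::nat\<Rightarrow>real. y i)"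
  by (simp add: continuous_map_iff_continuous)

lemma coeff_f_eta: "d \<ge> 2 \<Longrightarrow> P \<in> A_set d \<Longrightarrow> coeff (fst P) i = (if i < d - 1 then eta d P i else 0)"
  unfolding A_set_def eta_alt by (auto intro!: coeff_eq_0)

lemma coeff_g_eta: "d \<ge> 2 \<Longrightarrow> P \<in> A_set d \<Longrightarrow> coeff (fst (snd P)) i = (if i < d then eta d P (i + (d - 1)) else 0)"
  unfolding A_set_def eta_alt by (auto intro!: coeff_eq_0)

lemma coeff_h_eta: "d \<ge> 2 \<Longrightarrow> P \<in> A_set d \<Longrightarrow> coeff (snd (snd P)) i = (if i < d + 1 then eta d P (i + (2 * d - 1)) else 0)"
  unfolding A_set_def eta_alt by (auto intro!: coeff_eq_0)

lemma cont_eta_comp: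
  assumes "continuous_map euclidean euclideanreal u"
  shows "continuous_map (A_top d) euclideanreal (\<lambda>P. u (eta d P))"
  using continuous_map_pullback[OF assms, of "A_set d" "eta d"] unfolding A_top_def o_def .

lemma cont_coeff_A:
  assumes "d \<ge> 2"
  shows "continuous_map (A_top d) euclideanreal (\<lambda>P. coeff (fst P) i)"
    "continuous_map (A_top d) euclideanreal (\<lambda>P. coeff (fst (snd P)) i)"
    "continuous_map (A_top d) euclideanreal (\<lambda>P. coeff (snd (snd P)) i)"
proof -
  have c: "continuous_map (A_top d) euclideanreal (\<lambda>P. (\<lambda>y. if b then y j else 0) (eta d P))" for b j
    by (rule cont_eta_comp) (cases b, auto simp: proj_cont)
  show "continuous_map (A_top d) euclideanreal (\<lambda>P. coeff (fst P) i)"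
    by (rule continuous_map_eq[OF c[of "i < d - 1" i]]) (use assms in \<open>simp add: topspace_A coeff_f_eta\<close>)
  show "continuous_map (A_top d) euclideanreal (\<lambda>P. coeff (fst (snd P)) i)"
    by (rule continuous_map_eq[OF c[of "i < d" "i + (d - 1)"]]) (use assms in \<open>simp add: topspace_A coeff_g_eta\<close>)
  show "continuous_map (A_top d) euclideanreal (\<lambda>P. coeff (snd (snd P)) i)"
    by (rule continuous_map_eq[OF c[of "i < d + 1" "i + (2 * d - 1)"]]) (use assms in \<open>simp add: topspace_A coeff_h_eta\<close>)
qed

lemma cont_coeff_O:
  assumes "d \<ge> 2"
  shows "continuous_map (O_top d) euclideanreal (\<lambda>P. coeff (fst P) i)"
    "continuous_map (O_top d) euclideanreal (\<lambda>P. coeff (fst (snd P)) i)"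
    "continuous_map (O_top d) euclideanreal (\<lambda>P. coeff (snd (snd P)) i)"
  using cont_coeff_A[OF assms] unfolding O_top_def by (auto intro: continuous_map_from_subtopology)

lemma cont_into_A:
  assumes "k \<in> topspace X \<rightarrow> A_set d"
    and "\<And>i. continuous_map X euclideanreal (\<lambda>x. coeff (fst (k x)) i)"
    and "\<And>i. continuous_map X euclideanreal (\<lambda>x. coeff (fst (snd (k x))) i)"
    and "\<And>i. continuous_map X euclideanreal (\<lambda>x. coeff (snd (snd (k x))) i)"
  shows "continuous_map X (A_top d) k"
  unfolding A_top_def
proof (rule continuous_map_pullback')
  show "topspace X \<subseteq> k -` A_set d" using assms(1) by auto
  have "continuous_map X euclideanreal (\<lambda>x. eta d (k x) j)" for j
  proof -
    have e: "(\<lambda>x. eta d (k x) j) = (if j < d - 1 then (\<lambda>x. coeff (fst (k x)) j)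
          else if j < 2 * d - 1 then (\<lambda>x. coeff (fst (snd (k x))) (j - (d - 1)))
          else if j < 3 * d then (\<lambda>x. coeff (snd (snd (k x))) (j - (2 * d - 1)))
          else (\<lambda>x. 0))"
      by (auto simp: eta_alt fun_eq_iff)
    show ?thesis unfolding e using assms(2-4) by simp
  qed
  then have "continuous_map X (product_topology (\<lambda>i. euclideanreal) UNIV) (\<lambda>x. eta d (k x))"
    by (simp add: continuous_map_componentwise_UNIV)
  then show "continuous_map X euclidean (eta d \<circ> k)"
    by (simp add: euclidean_product_topology o_def)
qed

lemma cont_into_O:
  assumes "k \<in> topspace X \<rightarrow> O_set d"
    and "\<And>i. continuous_map X euclideanreal (\<lambda>x. coeff (fst (k x)) i)"
    and "\<And>i. continuous_map X euclideanreal (\<lambda>x. coeff (fst (snd (k x))) i)"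
    and "\<And>i. continuous_map X euclideanreal (\<lambda>x. coeff (snd (snd (k x))) i)"
  shows "continuous_map X (O_top d) k"
  unfolding O_top_def continuous_map_in_subtopology
  using cont_into_A[of k X d] assms O_sub_A by blast

lemma top_eqI:
  assumes "continuous_map X Y id" "continuous_map Y X id" "topspace X = topspace Y"
  shows "X = Y"
proof (rule topology_eq[THEN iffD2], intro allI iffI)
  fix U assume "openin X U"
  then have "openin Y {x \<in> topspace Y. id x \<in> U}" using assms(2) openin_continuous_map_preimage by blast
  moreover have "{x \<in> topspace Y. id x \<in> U} = U" using \<open>openin X U\<close> assms(3) openin_subset by fastforce
  ultimately show "openin Y U" by simp
next
  fix U assume "openin Y U"
  then have "openin X {x \<in> topspace X. id x \<in> U}" using assms(1) openin_continuous_map_preimage by blast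
  moreover have "{x \<in> topspace X. id x \<in> U} = U" using \<open>openin Y U\<close> assms(3) openin_subset by fastforce
  ultimately show "openin X U" by simp
qed

lemma A_mono: "d \<le> e \<Longrightarrow> A_set d \<subseteq> A_set e"
  unfolding A_set_def by auto

lemma O_mono: "d \<le> e \<Longrightarrow> O_set d \<subseteq> O_set e"
  unfolding O_set_def using A_mono by auto

lemma O_sub_top:
  assumes "2 \<le> d" "d \<le> e"
  shows "O_top d = subtopology (O_top e) (O_set d)"
proof (rule top_eqI)
  have de: "O_set d \<subseteq> O_set e" using O_mono assms by auto
  show "topspace (O_top d) = topspace (subtopology (O_top e) (O_set d))"
    using de by (simp add: topspace_O Int_absorb1)
  have "continuous_map (O_top d) (O_top e) id"
    by (rule cont_into_O) (use de cont_coeff_O[of d] assms in \<open>auto simp: topspace_O\<close>)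
  then show "continuous_map (O_top d) (subtopology (O_top e) (O_set d)) id"
    by (simp add: continuous_map_in_subtopology topspace_O)
  show "continuous_map (subtopology (O_top e) (O_set d)) (O_top d) id"
    using cont_into_O[of id "subtopology (O_top e) (O_set d)" d] cont_coeff_O[of e] assms de
    by (auto simp: topspace_O intro: continuous_map_from_subtopology)
qed

lemma cont_from_K:
  assumes "\<And>d. d \<ge> 2 \<Longrightarrow> continuous_map (O_top d) Y f"
  shows "continuous_map K_top Y f"
  unfolding continuous_map_def
proof (intro conjI allI impI)
  show "f \<in> topspace K_top \<rightarrow> topspace Y"
    using assms unfolding topspace_K K_set_def continuous_map_def topspace_O by auto
  fix U assume U: "openin Y U"
  show "openin K_top {x \<in> topspace K_top. f x \<in> U}"
    unfolding openin_K topspace_K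
  proof (intro conjI allI impI)
    fix d :: nat assume "d \<ge> 2"
    then have "{x \<in> K_set. f x \<in> U} \<inter> O_set d = {x \<in> topspace (O_top d). f x \<in> U}"
      using O_sub_K[OF \<open>d\<ge>2\<close>] by (auto simp: topspace_O)
    then show "openin (O_top d) ({x \<in> K_set. f x \<in> U} \<inter> O_set d)"
      using openin_continuous_map_preimage[OF assms[OF \<open>d\<ge>2\<close>] U] by simp
  qed auto
qed

lemma cont_O_to_K:
  assumes "d \<ge> 2"
  shows "continuous_map (O_top d) K_top id"
  unfolding continuous_map_def
proof (intro conjI allI impI)
  show "id \<in> topspace (O_top d) \<rightarrow> topspace K_top"
    using O_sub_K[OF assms] by (auto simp: topspace_O topspace_K)
  fix U assume "openin K_top U"
  then have "openin (O_top d) (U \<inter> O_set d)" using assms openin_K by auto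
  moreover have "{x \<in> topspace (O_top d). id x \<in> U} = U \<inter> O_set d" by (auto simp: topspace_O)
  ultimately show "openin (O_top d) {x \<in> topspace (O_top d). id x \<in> U}" by simp
qed


lemma tube_step:
  assumes e: "e \<ge> 2" and W: "openin (prod_topology (top_of_set {0..1::real}) (O_top e)) (W \<inter> ({0..1} \<times> O_set e))"
    and C: "compactin (top_of_set {0..1::real}) C" and S: "S \<subseteq> O_set e" and CS: "C \<times> S \<subseteq> W"
  shows "\<exists>U. openin (O_top e) U \<and> S \<subseteq> U \<and> C \<times> U \<subseteq> W"
proof -
  have CI: "C \<subseteq> {0..1}" using C compactin_subset_topspace by fastforce
  have "\<forall>x\<in>S. \<exists>V. openin (O_top e) V \<and> x \<in> V \<and> C \<times> V \<subseteq> W"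
  proof
    fix x assume x: "x \<in> S"
    have "C \<times> {x} \<subseteq> W \<inter> ({0..1} \<times> O_set e)" using CS CI S x by auto
    moreover have "x \<in> topspace (O_top e)" using x S by (auto simp: topspace_O)
    ultimately obtain U V where "openin (top_of_set {0..1}) U" "openin (O_top e) V" "C \<subseteq> U" "x \<in> V"
      "U \<times> V \<subseteq> W \<inter> ({0..1} \<times> O_set e)"
      using tube_lemma_left[OF W C] by metis
    then show "\<exists>V. openin (O_top e) V \<and> x \<in> V \<and> C \<times> V \<subseteq> W" by blast
  qed
  then obtain V where V: "\<And>x. x \<in> S \<Longrightarrow> openin (O_top e) (V x) \<and> x \<in> V x \<and> C \<times> V x \<subseteq> W"
    by metis
  have "openin (O_top e) (\<Union>(V ` S))" using V by (intro openin_Union) auto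
  moreover have "S \<subseteq> \<Union>(V ` S)" using V by blast
  moreover have "C \<times> \<Union>(V ` S) \<subseteq> W" using V by blast
  ultimately show ?thesis by blast
qed

lemma open_prod_K:
  assumes Wsub: "W \<subseteq> {0..1} \<times> K_set"
    and Wopen: "\<And>d. d \<ge> 2 \<Longrightarrow> openin (prod_topology (top_of_set {0..1::real}) (O_top d)) (W \<inter> ({0..1} \<times> O_set d))"
  shows "openin (prod_topology (top_of_set {0..1::real}) K_top) W"
  unfolding openin_prod_topology_alt
proof (intro allI impI)
  fix s0 x0 assume sx: "(s0, x0) \<in> W"
  then obtain d0 where d0: "d0 \<ge> 2" "x0 \<in> O_set d0" using Wsub unfolding K_set_def by auto
  have s0: "s0 \<in> {0..1}" using subsetD[OF Wsub sx] by blast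
  have sxd: "(s0, x0) \<in> W \<inter> ({0..1} \<times> O_set d0)" using sx s0 d0 by simp
  from Wopen[OF d0(1), unfolded openin_prod_topology_alt, rule_format, OF sxd]
  obtain J0 U0 where J0: "openin (top_of_set {0..1}) J0" "openin (O_top d0) U0" "s0 \<in> J0" "x0 \<in> U0"
    "J0 \<times> U0 \<subseteq> W \<inter> ({0..1} \<times> O_set d0)"
    by blast
  from J0(1) have "\<forall>x\<in>J0. \<exists>e>0. \<forall>x'\<in>{0..1}. dist x' x < e \<longrightarrow> x' \<in> J0"
    by (simp add: openin_euclidean_subtopology_iff)
  then obtain \<epsilon> where eps: "\<epsilon> > 0" "\<And>x'. x' \<in> {0..1} \<Longrightarrow> dist x' s0 < \<epsilon> \<Longrightarrow> x' \<in> J0"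
    using J0(3) by blast
  define C where "C = {0..1} \<inter> cball s0 (\<epsilon>/2)"
  define J where "J = {0..1} \<inter> ball s0 (\<epsilon>/2)"
  have C: "compactin (top_of_set {0..1::real}) C"
    unfolding C_def by (simp add: compactin_subtopology compact_Int_closed)
  have CJ0: "C \<subseteq> J0" unfolding C_def using eps by (auto simp: dist_commute)
  have JC: "J \<subseteq> C" unfolding J_def C_def by auto
  have J: "openin (top_of_set {0..1}) J" "s0 \<in> J" unfolding J_def using s0 eps
    by (auto intro: openin_open_Int)
  have Cx0: "C \<times> {x0} \<subseteq> W" using CJ0 J0 by auto
  define step where "step e S = (SOME U. openin (O_top e) U \<and> S \<subseteq> U \<and> C \<times> U \<subseteq> W)" for e S
  have step: "openin (O_top e) (step e S) \<and> S \<subseteq> step e S \<and> C \<times> step e S \<subseteq> W"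
    if "e \<ge> 2" "S \<subseteq> O_set e" "C \<times> S \<subseteq> W" for e S
    unfolding step_def by (rule someI_ex, rule tube_step[OF that(1) Wopen[OF that(1)] C that(2,3)])
  define Us where "Us = rec_nat (step d0 {x0}) (\<lambda>n S. step (d0 + Suc n) S)"
  have Us0: "Us 0 = step d0 {x0}" and UsS: "\<And>n. Us (Suc n) = step (d0 + Suc n) (Us n)"
    unfolding Us_def by simp_all
  have P: "openin (O_top (d0 + n)) (Us n) \<and> C \<times> Us n \<subseteq> W" for n
  proof (induction n)
    case 0
    show ?case using step[of d0 "{x0}"] d0 Cx0 by (simp add: Us0)
  next
    case (Suc n)
    have "Us n \<subseteq> O_set (d0 + n)" using Suc openin_subset topspace_O by metis
    also have "\<dots> \<subseteq> O_set (d0 + Suc n)" by (rule O_mono) simp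
    finally show ?case using step[of "d0 + Suc n" "Us n"] d0 Suc by (simp add: UsS)
  qed
  have mono1: "Us n \<subseteq> Us (Suc n)" for n
  proof -
    have "Us n \<subseteq> O_set (d0 + n)" using P openin_subset topspace_O by metis
    also have "\<dots> \<subseteq> O_set (d0 + Suc n)" by (rule O_mono) simp
    finally show ?thesis using step[of "d0 + Suc n" "Us n"] d0 P by (simp add: UsS)
  qed
  have mono: "n \<le> m \<Longrightarrow> Us n \<subseteq> Us m" for n m
    by (rule lift_Suc_mono_le[of Us, OF mono1])
  have UsO: "Us n \<subseteq> O_set (d0 + n)" for n using P openin_subset topspace_O by metis
  define U where "U = (\<Union>n. Us n)"
  have "openin K_top U"
    unfolding openin_K
  proof (intro conjI allI impI)
    show "U \<subseteq> K_set" unfolding U_def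
    proof (rule UN_least)
      fix n
      have "Us n \<subseteq> O_set (d0 + n)" by (rule UsO)
      also have "\<dots> \<subseteq> K_set" by (rule O_sub_K) (use d0 in simp)
      finally show "Us n \<subseteq> K_set" .
    qed
    fix d :: nat assume d: "d \<ge> 2"
    have eq: "U \<inter> O_set d = (\<Union>n. Us (n + d) \<inter> O_set d)"
    proof
      show "U \<inter> O_set d \<subseteq> (\<Union>n. Us (n + d) \<inter> O_set d)"
      proof
        fix x assume "x \<in> U \<inter> O_set d"
        then obtain n where "x \<in> Us n" "x \<in> O_set d" unfolding U_def by blast
        moreover have "Us n \<subseteq> Us (n + d)" by (rule mono) simp
        ultimately show "x \<in> (\<Union>n. Us (n + d) \<inter> O_set d)" by blast
      qed
      show "(\<Union>n. Us (n + d) \<inter> O_set d) \<subseteq> U \<inter> O_set d" unfolding U_def by blast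
    qed
    have "openin (O_top d) (Us (n + d) \<inter> O_set d)" for n
    proof -
      have "O_top d = subtopology (O_top (d0 + (n + d))) (O_set d)"
        by (rule O_sub_top) (use d in auto)
      then show ?thesis using P[of "n + d"] by (auto simp: openin_subtopology)
    qed
    then show "openin (O_top d) (U \<inter> O_set d)" unfolding eq by (intro openin_Union) blast
  qed
  moreover have "J \<times> U \<subseteq> W"
  proof
    fix z assume "z \<in> J \<times> U"
    then obtain a b n where z: "z = (a, b)" "a \<in> J" "b \<in> Us n" unfolding U_def by blast
    then have "(a, b) \<in> C \<times> Us n" using JC by blast
    then show "z \<in> W" using P[of n] z(1) by blast
  qed
  moreover have "x0 \<in> U"
  proof -
    have "{x0} \<subseteq> Us 0" using step[of d0 "{x0}"] d0 Cx0 by (simp add: Us0)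
    then show ?thesis unfolding U_def by blast
  qed
  ultimately show "\<exists>U V. openin (top_of_set {0..1}) U \<and> openin K_top V \<and> s0 \<in> U \<and> x0 \<in> V \<and> U \<times> V \<subseteq> W"
    using J by blast
qed

lemma cont_prod_K:
  assumes cont: "\<And>d. d \<ge> 2 \<Longrightarrow> continuous_map (prod_topology (top_of_set {0..1::real}) (O_top d)) (O_top d) h"
  shows "continuous_map (prod_topology (top_of_set {0..1::real}) K_top) K_top h"
  unfolding continuous_map_def
proof (intro conjI allI impI)
  have ts: "topspace (prod_topology (top_of_set {0..1::real}) K_top) = {0..1} \<times> K_set"
    by (simp add: topspace_K)
  have hmap: "h (s, x) \<in> O_set d" if "d \<ge> 2" "s \<in> {0..1}" "x \<in> O_set d" for d s x
    using cont[OF that(1)] that unfolding continuous_map_def by (auto simp: topspace_O)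
  show "h \<in> topspace (prod_topology (top_of_set {0..1}) K_top) \<rightarrow> topspace K_top"
    unfolding ts topspace_K K_set_def using hmap by fastforce
  fix V assume V: "openin K_top V"
  show "openin (prod_topology (top_of_set {0..1}) K_top) {x \<in> topspace (prod_topology (top_of_set {0..1}) K_top). h x \<in> V}"
  proof (rule open_prod_K)
    show "{x \<in> topspace (prod_topology (top_of_set {0..1}) K_top). h x \<in> V} \<subseteq> {0..1} \<times> K_set"
      unfolding ts by auto
    fix d :: nat assume d: "d \<ge> 2"
    have eq: "{x \<in> topspace (prod_topology (top_of_set {0..1}) K_top). h x \<in> V} \<inter> ({0..1} \<times> O_set d)
        = {x \<in> topspace (prod_topology (top_of_set {0..1}) (O_top d)). h x \<in> V \<inter> O_set d}"
      unfolding ts using O_sub_K[OF d] hmap[OF d] by (auto simp: topspace_O)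
    have o: "openin (O_top d) (V \<inter> O_set d)" using V d by (simp add: openin_K)
    have "openin (prod_topology (top_of_set {0..1}) (O_top d))
       {x \<in> topspace (prod_topology (top_of_set {0..1}) (O_top d)). h x \<in> V \<inter> O_set d}"
      by (rule openin_continuous_map_preimage[OF cont[OF d] o])
    then show "openin (prod_topology (top_of_set {0..1}) (O_top d))
      ({x \<in> topspace (prod_topology (top_of_set {0..1}) K_top). h x \<in> V} \<inter> ({0..1} \<times> O_set d))"
      unfolding eq .
  qed
qed


definition Tp :: "real \<Rightarrow> real \<Rightarrow> real poly \<Rightarrow> real poly" where
  "Tp s c p = Abs_poly (\<lambda>i. if i = 0 then s * coeff p 0 else coeff p i * s ^ (i - 1) / c)"

lemma coeff_Tp: "coeff (Tp s c p) i = (if i = 0 then s * coeff p 0 else coeff p i * s ^ (i - 1) / c)"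
proof -
  have "coeff (Tp s c p) = (\<lambda>i. if i = 0 then s * coeff p 0 else coeff p i * s ^ (i - 1) / c)"
    unfolding Tp_def by (rule coeff_Abs_poly[where n = "degree p"]) (auto simp: coeff_eq_0)
  then show ?thesis by simp
qed

lemma degree_Tp: "degree (Tp s c p) \<le> degree p"
  by (rule degree_le) (auto simp: coeff_Tp coeff_eq_0)

lemma poly_sum:
  fixes q :: "real poly"
  assumes "\<And>i. i \<ge> N \<Longrightarrow> coeff q i = 0"
  shows "poly q x = (\<Sum>i<N. coeff q i * x ^ i)"
proof (cases "q = 0")
  case True then show ?thesis by simp
next
  case False
  then have "coeff q (degree q) \<noteq> 0" by simp
  then have dN: "degree q < N" using assms by (meson not_less)
  have "poly q x = (\<Sum>i\<le>degree q. coeff q i * x ^ i)" by (rule poly_altdef)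
  also have "\<dots> = (\<Sum>i<N. coeff q i * x ^ i)"
    by (rule sum.mono_neutral_left) (use dN in \<open>auto simp: coeff_eq_0\<close>)
  finally show ?thesis .
qed

lemma poly_Tp_ident:
  assumes c: "c \<noteq> 0"
  shows "poly p (s * t) = coeff p 0 + s * c * (poly (Tp s c p) t - s * coeff p 0)"
proof -
  define n where "n = degree p"
  have "poly p (s * t) = (\<Sum>i<Suc n. coeff p i * (s * t) ^ i)"
    by (rule poly_sum) (auto simp: n_def coeff_eq_0)
  also have "\<dots> = coeff p 0 + (\<Sum>i<n. coeff p (Suc i) * (s * t) ^ Suc i)"
    by (simp only: sum.lessThan_Suc_shift) simp
  finally have 1: "poly p (s * t) = coeff p 0 + (\<Sum>i<n. coeff p (Suc i) * (s * t) ^ Suc i)" .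
  have "poly (Tp s c p) t = (\<Sum>i<Suc n. coeff (Tp s c p) i * t ^ i)"
    by (rule poly_sum) (auto simp: n_def coeff_eq_0 coeff_Tp)
  also have "\<dots> = s * coeff p 0 + (\<Sum>i<n. coeff p (Suc i) * s ^ i / c * t ^ Suc i)"
    by (simp only: sum.lessThan_Suc_shift) (simp add: coeff_Tp)
  finally have 2: "poly (Tp s c p) t = s * coeff p 0 + (\<Sum>i<n. coeff p (Suc i) * s ^ i / c * t ^ Suc i)" .
  have "s * c * (\<Sum>i<n. coeff p (Suc i) * s ^ i / c * t ^ Suc i) = (\<Sum>i<n. coeff p (Suc i) * (s * t) ^ Suc i)"
    unfolding sum_distrib_left by (rule sum.cong) (use c in \<open>auto simp: power_mult_distrib\<close>)
  then show ?thesis using 1 2 by simp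
qed

lemma poly_pderiv_Tp:
  "poly (pderiv (Tp s c p)) t = poly (pderiv p) (s * t) / c"
proof -
  define n where "n = degree p"
  have "poly (pderiv (Tp s c p)) t = (\<Sum>i<n. coeff (pderiv (Tp s c p)) i * t ^ i)"
    by (rule poly_sum) (auto simp: n_def coeff_eq_0 coeff_Tp coeff_pderiv)
  also have "\<dots> = (\<Sum>i<n. coeff (pderiv p) i * (s * t) ^ i) / c"
    unfolding sum_divide_distrib by (rule sum.cong) (auto simp: coeff_Tp coeff_pderiv power_mult_distrib)
  also have "(\<Sum>i<n. coeff (pderiv p) i * (s * t) ^ i) = poly (pderiv p) (s * t)"
    by (rule poly_sum[symmetric]) (auto simp: n_def coeff_eq_0 coeff_pderiv)
  finally show ?thesis .
qed

lemma Tp_0: "Tp 0 c p = [:0, coeff p 1 / c:]"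
proof (rule poly_eqI)
  fix i show "coeff (Tp 0 c p) i = coeff [:0, coeff p 1 / c:] i"
    by (cases i; cases "i - 1") (auto simp: coeff_Tp coeff_pCons)
qed

lemma Tp_1: "Tp 1 1 p = p"
  by (rule poly_eqI) (simp add: coeff_Tp)

lemma coeff_lin: "coeff [:0, a:] i = (if i = 1 then a else 0)"
  by (cases i; cases "i - 1") (auto simp: coeff_pCons)


definition nv :: "polymap \<Rightarrow> real" where
  "nv P = sqrt ((coeff (fst P) 1)\<^sup>2 + (coeff (fst (snd P)) 1)\<^sup>2 + (coeff (snd (snd P)) 1)\<^sup>2)"

definition cc :: "real \<Rightarrow> polymap \<Rightarrow> real" where
  "cc s P = s + (1 - s) * nv P"

definition Hm :: "real \<times> polymap \<Rightarrow> polymap" where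
  "Hm z = (Tp (fst z) (cc (fst z) (snd z)) (fst (snd z)),
           Tp (fst z) (cc (fst z) (snd z)) (fst (snd (snd z))),
           Tp (fst z) (cc (fst z) (snd z)) (snd (snd (snd z))))"

definition Fm :: "polymap \<Rightarrow> real \<times> real \<times> real" where
  "Fm P = (coeff (fst P) 1 / nv P, coeff (fst (snd P)) 1 / nv P, coeff (snd (snd P)) 1 / nv P)"

definition Gm :: "real \<times> real \<times> real \<Rightarrow> polymap" where
  "Gm x = ([:0, fst x:], [:0, fst (snd x):], [:0, snd (snd x):])"

lemma knot_nv:
  assumes "poly_knot P" shows "nv P > 0"
proof -
  obtain f g h where P: "P = (f, g, h)" by (cases P) auto
  have "(poly (pderiv f) 0, poly (pderiv g) 0, poly (pderiv h) 0) \<noteq> (0, 0, 0)"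
    using assms unfolding P poly_knot_def by auto
  then have "(coeff f 1, coeff g 1, coeff h 1) \<noteq> (0, 0, 0)"
    by (simp add: poly_0_coeff_0 coeff_pderiv)
  then have "0 < (coeff f 1)\<^sup>2 \<or> 0 < (coeff g 1)\<^sup>2 \<or> 0 < (coeff h 1)\<^sup>2" by auto
  moreover have "0 \<le> (coeff f 1)\<^sup>2" "0 \<le> (coeff g 1)\<^sup>2" "0 \<le> (coeff h 1)\<^sup>2" by simp_all
  ultimately have "(coeff f 1)\<^sup>2 + (coeff g 1)\<^sup>2 + (coeff h 1)\<^sup>2 > 0" by linarith
  then show ?thesis unfolding nv_def P by simp
qed

lemma cc_pos:
  assumes s: "s \<in> {0..1}" and n: "nv P > 0" shows "cc s P > 0"
proof (cases "s = 0")
  case True then show ?thesis using n by (simp add: cc_def)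
next
  case False then have "s > 0" using s by auto
  moreover have "(1 - s) * nv P \<ge> 0" using s n by simp
  ultimately show ?thesis unfolding cc_def by linarith
qed

lemma Hm_0: "Hm (0, P) = Gm (Fm P)"
  by (simp add: Hm_def Gm_def Fm_def cc_def Tp_0)

lemma Hm_1: "Hm (1, P) = P"
  by (simp add: Hm_def cc_def Tp_1)

lemma lin_inj:
  fixes a b e c t1 t2 :: real
  assumes "(a, b, e) \<noteq> (0, 0, 0)" "c > 0" "a / c * t1 = a / c * t2" "b / c * t1 = b / c * t2" "e / c * t1 = e / c * t2"
  shows "t1 = t2"
  using assms by (cases "a = 0"; cases "b = 0") auto

lemma Tp_knot:
  assumes knot: "poly_knot (f, g, h)" and s: "s \<in> {0..1}" and c: "c > 0"
  shows "poly_knot (Tp s c f, Tp s c g, Tp s c h)"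
  unfolding poly_knot_def split
proof (intro conjI allI)
  have injP: "inj (pmap (f, g, h))" and der: "\<And>t. (poly (pderiv f) t, poly (pderiv g) t, poly (pderiv h) t) \<noteq> (0, 0, 0)"
    using knot unfolding poly_knot_def by auto
  show "inj (pmap (Tp s c f, Tp s c g, Tp s c h))"
  proof (rule injI)
    fix t1 t2 assume eq: "pmap (Tp s c f, Tp s c g, Tp s c h) t1 = pmap (Tp s c f, Tp s c g, Tp s c h) t2"
    show "t1 = t2"
    proof (cases "s = 0")
      case True
      have "(poly (pderiv f) 0, poly (pderiv g) 0, poly (pderiv h) 0) \<noteq> (0, 0, 0)" by (rule der)
      then have nz: "(coeff f 1, coeff g 1, coeff h 1) \<noteq> (0, 0, 0)"
        by (simp add: poly_0_coeff_0 coeff_pderiv)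
      from eq have "coeff f 1 / c * t1 = coeff f 1 / c * t2" "coeff g 1 / c * t1 = coeff g 1 / c * t2"
        "coeff h 1 / c * t1 = coeff h 1 / c * t2"
        by (simp_all add: True Tp_0 pmap_def)
      then show ?thesis using nz c lin_inj by blast
    next
      case False
      have "pmap (f, g, h) (s * t1) = pmap (f, g, h) (s * t2)"
        using eq c unfolding pmap_def by (simp add: poly_Tp_ident[of c _ s])
      then have "s * t1 = s * t2" using injP by (simp add: inj_eq)
      then show ?thesis using False by simp
    qed
  qed
  fix t
  show "(poly (pderiv (Tp s c f)) t, poly (pderiv (Tp s c g)) t, poly (pderiv (Tp s c h)) t) \<noteq> (0, 0, 0)"
    using der[of "s * t"] c by (auto simp: poly_pderiv_Tp)
qed

lemma Hm_O:
  assumes s: "s \<in> {0..1}" and P: "P \<in> O_set d"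
  shows "Hm (s, P) \<in> O_set d"
proof -
  obtain f g h where Pe: "P = (f, g, h)" by (cases P) auto
  have knot: "poly_knot (f, g, h)" and A: "(f, g, h) \<in> A_set d" using P Pe unfolding O_set_def by auto
  have c: "cc s P > 0" using cc_pos[OF s knot_nv] knot Pe by simp
  have "poly_knot (Hm (s, P))" unfolding Hm_def Pe using Tp_knot[OF knot s] c Pe by simp
  moreover have "Hm (s, P) \<in> A_set d"
  proof -
    have "Hm (s, P) = (Tp s (cc s P) f, Tp s (cc s P) g, Tp s (cc s P) h)" by (simp add: Hm_def Pe)
    then show ?thesis using A unfolding A_set_def
      using le_trans[OF degree_Tp[of s "cc s P" f]] le_trans[OF degree_Tp[of s "cc s P" g]]
        le_trans[OF degree_Tp[of s "cc s P" h]] by simp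
  qed
  ultimately show ?thesis unfolding O_set_def by simp
qed


lemma cont_fst_I:
  "continuous_map (prod_topology (top_of_set {0..1::real}) X) euclideanreal fst"
  using continuous_map_fst[of "top_of_set {0..1::real}" X] by (simp add: continuous_map_in_subtopology)

lemma cont_coeff_prod:
  assumes "d \<ge> 2"
  shows "continuous_map (prod_topology (top_of_set {0..1::real}) (O_top d)) euclideanreal (\<lambda>z. coeff (fst (snd z)) i)"
    "continuous_map (prod_topology (top_of_set {0..1::real}) (O_top d)) euclideanreal (\<lambda>z. coeff (fst (snd (snd z))) i)"
    "continuous_map (prod_topology (top_of_set {0..1::real}) (O_top d)) euclideanreal (\<lambda>z. coeff (snd (snd (snd z))) i)"
  using continuous_map_compose[OF continuous_map_snd cont_coeff_O(1)[OF assms]]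
    continuous_map_compose[OF continuous_map_snd cont_coeff_O(2)[OF assms]]
    continuous_map_compose[OF continuous_map_snd cont_coeff_O(3)[OF assms]]
  by (auto simp: o_def)

lemma cont_Hm:
  assumes d: "d \<ge> 2"
  shows "continuous_map (prod_topology (top_of_set {0..1::real}) (O_top d)) (O_top d) Hm"
proof (rule cont_into_O)
  let ?X = "prod_topology (top_of_set {0..1::real}) (O_top d)"
  show "Hm \<in> topspace ?X \<rightarrow> O_set d" using Hm_O by (auto simp: topspace_O)
  note cc = cont_coeff_prod[OF d] cont_fst_I
  have cnv: "continuous_map ?X euclideanreal (\<lambda>z. nv (snd z))"
    unfolding nv_def
    by (intro continuous_map_sqrt continuous_map_add continuous_map_real_pow cc)
  have ccc: "continuous_map ?X euclideanreal (\<lambda>z. cc (fst z) (snd z))"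
    unfolding cc_def
    by (intro continuous_map_add continuous_map_real_mult continuous_map_diff continuous_map_canonical_const cnv cc)
  have cpos: "cc (fst z) (snd z) \<noteq> 0" if "z \<in> topspace ?X" for z
  proof -
    have "fst z \<in> {0..1}" "snd z \<in> O_set d" using that by (auto simp: topspace_O)
    then have "fst z \<in> {0..1}" "poly_knot (snd z)" by (auto simp: O_set_def)
    then show ?thesis using cc_pos knot_nv by (metis less_irrefl)
  qed
  have T: "continuous_map ?X euclideanreal (\<lambda>z. coeff (Tp (fst z) (cc (fst z) (snd z)) (q z)) i)"
    if q0: "continuous_map ?X euclideanreal (\<lambda>z. coeff (q z) 0)"
      and qi: "continuous_map ?X euclideanreal (\<lambda>z. coeff (q z) i)" for q i
  proof (cases "i = 0")
    case True
    then show ?thesis unfolding coeff_Tp using continuous_map_real_mult[OF cont_fst_I q0] by simp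
  next
    case False
    have "continuous_map ?X euclideanreal (\<lambda>z. coeff (q z) i * fst z ^ (i - 1) / cc (fst z) (snd z))"
      by (rule continuous_map_real_divide[OF continuous_map_real_mult[OF qi continuous_map_real_pow[OF cont_fst_I]] ccc cpos])
    then show ?thesis unfolding coeff_Tp using False by simp
  qed
  fix i
  show "continuous_map ?X euclideanreal (\<lambda>x. coeff (fst (Hm x)) i)"
    unfolding Hm_def fst_conv by (rule T[of "\<lambda>z. fst (snd z)" i]) (rule cc(1))+
  show "continuous_map ?X euclideanreal (\<lambda>x. coeff (fst (snd (Hm x))) i)"
    unfolding Hm_def fst_conv snd_conv by (rule T[of "\<lambda>z. fst (snd (snd z))" i]) (rule cc(2))+
  show "continuous_map ?X euclideanreal (\<lambda>x. coeff (snd (snd (Hm x))) i)"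
    unfolding Hm_def snd_conv by (rule T[of "\<lambda>z. snd (snd (snd z))" i]) (rule cc(3))+
qed


lemma norm3: "norm (a, b, c :: real) = sqrt (a\<^sup>2 + b\<^sup>2 + c\<^sup>2)"
  by (simp add: norm_Pair add.assoc)

lemma K_knot: "P \<in> K_set \<Longrightarrow> poly_knot P"
  unfolding K_set_def O_set_def by auto

lemma nv_sq: "(nv P)\<^sup>2 = (coeff (fst P) 1)\<^sup>2 + (coeff (fst (snd P)) 1)\<^sup>2 + (coeff (snd (snd P)) 1)\<^sup>2"
  unfolding nv_def by (simp add: add_nonneg_nonneg)

lemma Fm_sphere:
  assumes "poly_knot P" shows "Fm P \<in> sphere 0 1"
proof -
  have n: "nv P > 0" using knot_nv[OF assms] .
  have "(coeff (fst P) 1 / nv P)\<^sup>2 + (coeff (fst (snd P)) 1 / nv P)\<^sup>2 + (coeff (snd (snd P)) 1 / nv P)\<^sup>2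
      = ((coeff (fst P) 1)\<^sup>2 + (coeff (fst (snd P)) 1)\<^sup>2 + (coeff (snd (snd P)) 1)\<^sup>2) / (nv P)\<^sup>2"
    by (simp add: power_divide add_divide_distrib)
  also have "\<dots> = 1" by (subst nv_sq[symmetric]) (use n in simp)
  finally show ?thesis unfolding Fm_def by (simp add: norm3)
qed

lemma cont_Fm_O:
  assumes d: "d \<ge> 2"
  shows "continuous_map (O_top d) euclidean Fm"
proof -
  note c = cont_coeff_O[OF d]
  have cnv: "continuous_map (O_top d) euclideanreal nv"
    unfolding nv_def
    by (intro continuous_map_sqrt continuous_map_add continuous_map_real_pow c)
  have nz: "nv P \<noteq> 0" if "P \<in> topspace (O_top d)" for P
  proof -
    have "poly_knot P" using that by (simp add: topspace_O O_set_def)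
    then show ?thesis using knot_nv[of P] by simp
  qed
  have "continuous_map (O_top d) (prod_topology euclideanreal (prod_topology euclideanreal euclideanreal))
     (\<lambda>P. (coeff (fst P) 1 / nv P, coeff (fst (snd P)) 1 / nv P, coeff (snd (snd P)) 1 / nv P))"
    by (intro continuous_map_pairedI continuous_map_real_divide c cnv nz)
  then show ?thesis unfolding Fm_def[abs_def] by simp
qed

lemma cont_Fm: "continuous_map K_top (top_of_set (sphere (0 :: real \<times> real \<times> real) 1)) Fm"
  unfolding continuous_map_in_subtopology
proof
  show "continuous_map K_top euclidean Fm" by (rule cont_from_K) (rule cont_Fm_O)
  show "Fm \<in> topspace K_top \<rightarrow> sphere 0 1"
    using Fm_sphere K_knot by (auto simp: topspace_K)
qed

lemma Gm_O3:
  assumes x: "x \<in> sphere (0 :: real \<times> real \<times> real) 1"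
  shows "Gm x \<in> O_set 3"
proof -
  obtain a b c where xe: "x = (a, b, c)" by (cases x) auto
  have nz: "(a, b, c) \<noteq> (0, 0, 0)" using x xe by auto
  have A: "Gm x \<in> A_set 3" unfolding A_set_def Gm_def xe by simp
  have "inj (pmap (Gm x))"
  proof (rule injI)
    fix t1 t2 assume "pmap (Gm x) t1 = pmap (Gm x) t2"
    then have "a * t1 = a * t2" "b * t1 = b * t2" "c * t1 = c * t2"
      by (simp_all add: pmap_def Gm_def xe mult.commute)
    then show "t1 = t2" using nz by (cases "a = 0"; cases "b = 0") auto
  qed
  moreover have "(poly (pderiv [:0, a:]) t, poly (pderiv [:0, b:]) t, poly (pderiv [:0, c:]) t) \<noteq> (0, 0, 0)" for t
    using nz by (simp add: pderiv_pCons)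
  ultimately have "poly_knot (Gm x)" unfolding poly_knot_def Gm_def xe by simp
  then show ?thesis using A unfolding O_set_def by simp
qed

lemma cont_Gm: "continuous_map (top_of_set (sphere (0 :: real \<times> real \<times> real) 1)) K_top Gm"
proof -
  have "continuous_map (top_of_set (sphere (0 :: real \<times> real \<times> real) 1)) (O_top 3) Gm"
  proof (rule cont_into_O)
    show "Gm \<in> topspace (top_of_set (sphere 0 1)) \<rightarrow> O_set 3" using Gm_O3 by auto
    fix i :: nat
    show "continuous_map (top_of_set (sphere 0 1)) euclideanreal (\<lambda>x. coeff (fst (Gm x)) i)"
      by (cases "i = 1") (auto simp: Gm_def coeff_lin intro!: continuous_intros)
    show "continuous_map (top_of_set (sphere 0 1)) euclideanreal (\<lambda>x. coeff (fst (snd (Gm x))) i)"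
      by (cases "i = 1") (auto simp: Gm_def coeff_lin intro!: continuous_intros)
    show "continuous_map (top_of_set (sphere 0 1)) euclideanreal (\<lambda>x. coeff (snd (snd (Gm x))) i)"
      by (cases "i = 1") (auto simp: Gm_def coeff_lin intro!: continuous_intros)
  qed
  from continuous_map_compose[OF this cont_O_to_K[of 3]] show ?thesis by simp
qed

lemma FG: "x \<in> sphere (0 :: real \<times> real \<times> real) 1 \<Longrightarrow> Fm (Gm x) = x"
proof -
  assume x: "x \<in> sphere (0 :: real \<times> real \<times> real) 1"
  obtain a b c where xe: "x = (a, b, c)" by (cases x) auto
  have "nv (Gm x) = 1" using x unfolding nv_def Gm_def xe by (simp add: coeff_lin norm3)
  then show ?thesis unfolding Fm_def by (simp add: Gm_def coeff_lin xe)
qed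

theorem mainTheorem2:
  shows "K_top homotopy_equivalent_space
           top_of_set (sphere (0 :: real \<times> real \<times> real) 1)"
  unfolding homotopy_equivalent_space_def
proof (intro exI conjI)
  show "continuous_map K_top (top_of_set (sphere 0 1)) Fm" by (rule cont_Fm)
  show "continuous_map (top_of_set (sphere 0 1)) K_top Gm" by (rule cont_Gm)
  show "homotopic_with (\<lambda>x. True) K_top K_top (Gm \<circ> Fm) id"
    unfolding homotopic_with_def
  proof (intro exI conjI allI ballI)
    show "continuous_map (prod_topology (top_of_set {0..1}) K_top) K_top Hm"
      by (rule cont_prod_K) (rule cont_Hm)
    fix x
    show "Hm (0, x) = (Gm \<circ> Fm) x" by (simp add: Hm_0)
    show "Hm (1, x) = id x" by (simp add: Hm_1)
  qed simp
  show "homotopic_with (\<lambda>x. True) (top_of_set (sphere 0 1)) (top_of_set (sphere 0 1)) (Fm \<circ> Gm) id"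
  proof (rule homotopic_with_equal)
    show "continuous_map (top_of_set (sphere 0 1)) (top_of_set (sphere 0 1)) (Fm \<circ> Gm)"
      by (rule continuous_map_compose[OF cont_Gm cont_Fm])
    fix x assume "x \<in> topspace (top_of_set (sphere (0 :: real \<times> real \<times> real) 1))"
    then show "(Fm \<circ> Gm) x = id x" using FG by simp
  qed simp_all
qed

end
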